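(* For every formula $A$ of $\mathbf{L_1}$, if not $\vdash_H A$, then $\dashv_H A$. That is, every formula satisfies $\vdash_H A$ or $\dashv_H A$.
   Context: Formulas of $\mathbf{L_1}$: built from atomic formulas $\epsilon ab$ ($a,b$ name variables, possibly equal) with primitive connectives $\vee,\sim$; $\wedge,\supset,\equiv$ defined as usual. Disjunctions may be associated in any way. $\vdash_H A$: $A$ belongs to the smallest set containing all instances of classical propositional tautologies and all formulas $\epsilon ab\supset\epsilon aa$, $(\epsilon ab\wedge\epsilon bc)\supset\epsilon ac$, $(\epsilon ab\wedge\epsilon bb)\supset\epsilon ba$, closed under modus ponens. Positive/negative parts (occurrences): $A$ is a positive part of $A$; if $B\vee C$ is a positive part then $B,C$ are positive parts; if $\sim B$ is a positive part then $B$ is a negative part; if $\sim B$ is a negative part then $B$ is a positive part. $F[B_+,B_-]$ denotes a formula in which some formula $B$ has one occurrence as positive part and another non-overlapping occurrence as negative part. Hintikka formula: a formula $H$ such that (1) $H$ is not of the form $F[B_+,B_-]$; (2) if $B\vee C$ is a negative part of $H$ then $B$ or $C$ is; (3) if $\epsilon ab$ is a negative part then so is $\epsilon aa$; (4) if $\epsilon ab,\epsilon bc$ are negative parts then so is $\epsilon ac$; (5) if $\epsilon ab,\epsilon bb$ are negative parts then so is $\epsilon ba$. $\mathbf{HAR}$: fix a name variable $a_0$; $\dashv_H$ is the smallest set such that $\dashv_H\epsilon a_0a_0$; $\dashv_H\sim\epsilon a_0a_0$; if $\vdash_H A\supset B$ and $\dashv_H B$ then $\dashv_H A$; if $\dashv_H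 A$ and $A$ is obtained from $B$ by uniform substitution of name variables for name variables then $\dashv_H B$; if $A$ is a Hintikka formula that is a disjunction of atomic or negated atomic formulas, $\dashv_H A$, and $\epsilon ab$ is not a negative part of $A$, then $\dashv_H A\vee\epsilon ab$. *)

theory Defs
  imports Main
begin

datatype fm = Eps nat nat | Disj fm fm | Neg fm

definition Conj :: "fm \<Rightarrow> fm \<Rightarrow> fm" where
  "Conj A B = Neg (Disj (Neg A) (Neg B))"
definition Imp :: "fm \<Rightarrow> fm \<Rightarrow> fm" where
  "Imp A B = Disj (Neg A) B"

fun evalf :: "(nat \<Rightarrow> nat \<Rightarrow> bool) \<Rightarrow> fm \<Rightarrow> bool" where
  "evalf v (Eps a b) = v a b"
| "evalf v (Disj A B) = (evalf v A \<or> evalf v B)"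
| "evalf v (Neg A) = (\<not> evalf v A)"

definition taut :: "fm \<Rightarrow> bool" where
  "taut A = (\<forall>v. evalf v A)"

inductive provH :: "fm \<Rightarrow> bool" where
  taut: "taut A \<Longrightarrow> provH A"
| ax1: "provH (Imp (Eps a b) (Eps a a))"
| ax2: "provH (Imp (Conj (Eps a b) (Eps b c)) (Eps a c))"
| ax3: "provH (Imp (Conj (Eps a b) (Eps b b)) (Eps b a))"
| mp: "provH (Imp A B) \<Longrightarrow> provH A \<Longrightarrow> provH B"

fun subAt :: "fm \<Rightarrow> nat list \<Rightarrow> fm option" where
  "subAt A [] = Some A"
| "subAt (Disj B C) (0 # p) = subAt B p"
| "subAt (Disj B C) (Suc 0 # p) = subAt C p"
| "subAt (Neg B) (0 # p) = subAt B p"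
| "subAt _ _ = None"

text \<open>Polarity of the occurrence at a path (True = positive), when the path is valid.\<close>
fun polAt :: "fm \<Rightarrow> nat list \<Rightarrow> bool" where
  "polAt A [] = True"
| "polAt (Disj B C) (0 # p) = polAt B p"
| "polAt (Disj B C) (Suc 0 # p) = polAt C p"
| "polAt (Neg B) (0 # p) = (\<not> polAt B p)"
| "polAt _ _ = True"

definition posOcc :: "fm \<Rightarrow> nat list \<Rightarrow> fm \<Rightarrow> bool" where
  "posOcc H p B = (subAt H p = Some B \<and> polAt H p)"
definition negOcc :: "fm \<Rightarrow> nat list \<Rightarrow> fm \<Rightarrow> bool" where
  "negOcc H p B = (subAt H p = Some B \<and> \<not> polAt H p)"

definition negPart :: "fm \<Rightarrow> fm \<Rightarrow> bool" where
  "negPart B H = (\<exists>p. negOcc H p B)"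

text \<open>H is of the form F[B+,B-]: some B occurs positively and, at a non-overlapping
  position, negatively.\<close>
definition clash :: "fm \<Rightarrow> bool" where
  "clash H = (\<exists>B p q. posOcc H p B \<and> negOcc H q B \<and>
                       \<not> (\<exists>r. q = p @ r) \<and> \<not> (\<exists>r. p = q @ r))"

definition hintikka :: "fm \<Rightarrow> bool" where
  "hintikka H = (\<not> clash H
    \<and> (\<forall>B C. negPart (Disj B C) H \<longrightarrow> negPart B H \<or> negPart C H)
    \<and> (\<forall>a b. negPart (Eps a b) H \<longrightarrow> negPart (Eps a a) H)
    \<and> (\<forall>a b c. negPart (Eps a b) H \<and> negPart (Eps b c) H \<longrightarrow> negPart (Eps a c) H)
    \<and> (\<forall>a b. negPart (Eps a b) H \<and> negPart (Eps b b) H \<longrightarrow> negPart (Eps b a) H))"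

inductive litDisj :: "fm \<Rightarrow> bool" where
  "litDisj (Eps a b)"
| "litDisj (Neg (Eps a b))"
| "litDisj A \<Longrightarrow> litDisj B \<Longrightarrow> litDisj (Disj A B)"

fun substN :: "(nat \<Rightarrow> nat) \<Rightarrow> fm \<Rightarrow> fm" where
  "substN s (Eps a b) = Eps (s a) (s b)"
| "substN s (Disj A B) = Disj (substN s A) (substN s B)"
| "substN s (Neg A) = Neg (substN s A)"

inductive refH :: "nat \<Rightarrow> fm \<Rightarrow> bool" for a0 :: nat where
  r1: "refH a0 (Eps a0 a0)"
| r2: "refH a0 (Neg (Eps a0 a0))"
| r3: "provH (Imp A B) \<Longrightarrow> refH a0 B \<Longrightarrow> refH a0 A"
| r4: "refH a0 A \<Longrightarrow> A = substN s B \<Longrightarrow> refH a0 B"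
| r5: "hintikka A \<Longrightarrow> litDisj A \<Longrightarrow> refH a0 A \<Longrightarrow> \<not> negPart (Eps a b) A
        \<Longrightarrow> refH a0 (Disj A (Eps a b))"

end

theory Submission
  imports Defs
begin

fun varsl :: "fm \<Rightarrow> nat list" where
  "varsl (Eps a b) = [a, b]"
| "varsl (Disj A B) = varsl A @ varsl B"
| "varsl (Neg A) = varsl A"

lemma varsl_ne: "varsl A \<noteq> []"
  by (induction A) auto

lemma evalf_cong:
  "(\<forall>a\<in>set (varsl A). \<forall>b\<in>set (varsl A). v a b = w a b) \<Longrightarrow> evalf v A = evalf w A"
  by (induction A) auto

definition closedR :: "(nat \<Rightarrow> nat \<Rightarrow> bool) \<Rightarrow> bool" where
  "closedR v = ((\<forall>a b. v a b \<longrightarrow> v a a) \<and> (\<forall>a b c. v a b \<and> v b c \<longrightarrow> v a c)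
     \<and> (\<forall>a b. v a b \<and> v b b \<longrightarrow> v b a))"

fun impl :: "fm list \<Rightarrow> fm \<Rightarrow> fm" where
  "impl [] A = A"
| "impl (x # xs) A = Imp x (impl xs A)"

lemma evalf_impl: "evalf w (impl xs A) = ((\<forall>x\<in>set xs. evalf w x) \<longrightarrow> evalf w A)"
  by (induction xs) (auto simp: Imp_def)

lemma provH_impl: "\<forall>x\<in>set xs. provH x \<Longrightarrow> provH (impl xs A) \<Longrightarrow> provH A"
  by (induction xs) (auto intro: provH.mp)

definition axs :: "nat list \<Rightarrow> fm list" where
  "axs vs = [Imp (Eps a b) (Eps a a). a \<leftarrow> vs, b \<leftarrow> vs]
     @ [Imp (Conj (Eps a b) (Eps b c)) (Eps a c). a \<leftarrow> vs, b \<leftarrow> vs, c \<leftarrow> vs]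
     @ [Imp (Conj (Eps a b) (Eps b b)) (Eps b a). a \<leftarrow> vs, b \<leftarrow> vs]"

lemma axs_prov: "x \<in> set (axs vs) \<Longrightarrow> provH x"
  by (auto simp: axs_def intro: provH.intros)

lemma completeness:
  assumes "\<forall>v. closedR v \<longrightarrow> evalf v A"
  shows "provH A"
proof -
  let ?V = "set (varsl A)"
  have "taut (impl (axs (varsl A)) A)"
    unfolding taut_def
  proof
    fix w
    show "evalf w (impl (axs (varsl A)) A)"
      unfolding evalf_impl
    proof
      assume H: "\<forall>x\<in>set (axs (varsl A)). evalf w x"
      define v where "v a b = (a \<in> ?V \<and> b \<in> ?V \<and> w a b)" for a b
      have c: "closedR v" unfolding closedR_def
      proof (intro conjI allI impI)
        fix a b assume vab: "v a b"
        hence "Imp (Eps a b) (Eps a a) \<in> set (axs (varsl A))" by (auto simp: v_def axs_def)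
        thus "v a a" using H vab by (auto simp: v_def Imp_def)
      next
        fix a b c assume vab: "v a b \<and> v b c"
        hence "Imp (Conj (Eps a b) (Eps b c)) (Eps a c) \<in> set (axs (varsl A))" by (auto simp: v_def axs_def)
        thus "v a c" using H vab by (auto simp: v_def Imp_def Conj_def)
      next
        fix a b assume vab: "v a b \<and> v b b"
        hence "Imp (Conj (Eps a b) (Eps b b)) (Eps b a) \<in> set (axs (varsl A))" by (auto simp: v_def axs_def)
        thus "v b a" using H vab by (auto simp: v_def Imp_def Conj_def)
      qed
      have "evalf v A = evalf w A" by (rule evalf_cong) (auto simp: v_def)
      thus "evalf w A" using c assms by auto
    qed
  qed
  thus ?thesis using provH_impl axs_prov provH.taut by blast
qed

fun litset :: "fm \<Rightarrow> fm set" where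
  "litset (Disj A B) = litset A \<union> litset B"
| "litset A = {A}"

lemma evalf_litset: "evalf w H = (\<exists>l\<in>litset H. evalf w l)"
  by (induction H) auto

lemma litset_substN: "litset (substN s H) = substN s ` litset H"
  by (induction H) auto

lemma litset_foldl: "litset (foldl Disj x xs) = litset x \<union> (\<Union>y\<in>set xs. litset y)"
  by (induction xs arbitrary: x) auto

lemma litDisj_foldl: "litDisj x \<Longrightarrow> \<forall>y\<in>set xs. litDisj y \<Longrightarrow> litDisj (foldl Disj x xs)"
  by (induction xs arbitrary: x) (auto intro: litDisj.intros)

lemma neg_occ:
  "litDisj H \<Longrightarrow> subAt H p = Some B \<Longrightarrow> \<not> polAt H p \<Longrightarrow>
   \<exists>a b. B = Eps a b \<and> Neg (Eps a b) \<in> litset H"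
proof (induction H arbitrary: p rule: litDisj.induct)
  case (1 a b)
  then show ?case by (cases p) auto
next
  case (2 a b)
  then show ?case
  proof (cases p)
    case (Cons x q)
    then show ?thesis using 2
      by (cases x; cases q) auto
  qed auto
next
  case (3 X Y)
  then show ?case
  proof (cases p)
    case (Cons x q)
    consider "x = 0" | "x = Suc 0" | k where "x = Suc (Suc k)" by (metis not0_implies_Suc)
    then show ?thesis using 3 Cons by cases fastforce+
  qed auto
qed

lemma pos_occ:
  "litDisj H \<Longrightarrow> subAt H p = Some (Eps a b) \<Longrightarrow> polAt H p \<Longrightarrow> Eps a b \<in> litset H"
proof (induction H arbitrary: p rule: litDisj.induct)
  case (1 a b)
  then show ?case by (cases p) auto
next
  case (2 a b)
  then show ?case
  proof (cases p)
    case (Cons x q)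
    then show ?thesis using 2
      by (cases x; cases q) auto
  qed auto
next
  case (3 X Y)
  then show ?case
  proof (cases p)
    case (Cons x q)
    consider "x = 0" | "x = Suc 0" | k where "x = Suc (Suc k)" by (metis not0_implies_Suc)
    then show ?thesis using 3 Cons by cases fastforce+
  qed auto
qed

lemma neg_intro:
  "litDisj H \<Longrightarrow> Neg (Eps a b) \<in> litset H \<Longrightarrow> \<exists>p. subAt H p = Some (Eps a b) \<and> \<not> polAt H p"
proof (induction H rule: litDisj.induct)
  case (2 a' b')
  then show ?case by (intro exI[of _ "[0]"]) auto
next
  case (3 A B)
  show ?case
  proof (cases "Neg (Eps a b) \<in> litset A")
    case True
    then obtain p where "subAt A p = Some (Eps a b) \<and> \<not> polAt A p" using 3 by auto
    then show ?thesis by (intro exI[of _ "0 # p"]) auto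
  next
    case False
    then obtain p where "subAt B p = Some (Eps a b) \<and> \<not> polAt B p" using 3 by auto
    then show ?thesis by (intro exI[of _ "Suc 0 # p"]) auto
  qed
qed auto

lemma negPart_char:
  "litDisj H \<Longrightarrow> negPart B H = (\<exists>a b. B = Eps a b \<and> Neg (Eps a b) \<in> litset H)"
  unfolding negPart_def negOcc_def using neg_occ neg_intro by blast

lemma hint:
  assumes ld: "litDisj H" and c: "closedR v"
    and n: "\<forall>a b. Neg (Eps a b) \<in> litset H \<longleftrightarrow> (a \<in> V \<and> b \<in> V \<and> v a b)"
    and p: "\<forall>a b. Eps a b \<in> litset H \<longrightarrow> \<not> v a b"
  shows "hintikka H"
proof -
  have np: "\<And>a b. negPart (Eps a b) H = (a \<in> V \<and> b \<in> V \<and> v a b)"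
    using negPart_char[OF ld] n by auto
  have "\<not> clash H"
  proof
    assume "clash H"
    then obtain B pp q where "posOcc H pp B" "negOcc H q B" unfolding clash_def by blast
    then obtain a b where "B = Eps a b" "Neg (Eps a b) \<in> litset H" "Eps a b \<in> litset H"
      using neg_occ[OF ld] pos_occ[OF ld] unfolding posOcc_def negOcc_def by metis
    thus False using n p by blast
  qed
  moreover have "\<forall>B C. \<not> negPart (Disj B C) H" using negPart_char[OF ld] by auto
  ultimately show ?thesis unfolding hintikka_def np using c unfolding closedR_def by blast
qed


lemma add_pos:
  assumes c: "closedR v" and D0r: "refH a0 D0" and D0l: "litDisj D0"
    and n: "\<forall>a b. Neg (Eps a b) \<in> litset D0 \<longleftrightarrow> (a \<in> V \<and> b \<in> V \<and> v a b)"
    and p: "\<forall>a b. Eps a b \<in> litset D0 \<longrightarrow> \<not> v a b"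
    and lits: "\<forall>l\<in>litset D0. \<exists>a b. l = Eps a b \<or> l = Neg (Eps a b)"
  shows "(\<forall>y\<in>set ps. \<exists>a b. y = Eps a b \<and> \<not> v a b) \<Longrightarrow> refH a0 (foldl Disj D0 ps)"
proof (induction ps rule: rev_induct)
  case Nil
  then show ?case using D0r by simp
next
  case (snoc y ps)
  then obtain a b where y: "y = Eps a b" "\<not> v a b" by auto
  let ?H = "foldl Disj D0 ps"
  have ld: "litDisj ?H" using snoc.prems D0l by (auto intro!: litDisj_foldl intro: litDisj.intros)
  have ls: "litset ?H = litset D0 \<union> (\<Union>y\<in>set ps. litset y)" by (rule litset_foldl)
  have hn: "\<forall>a b. Neg (Eps a b) \<in> litset ?H \<longleftrightarrow> (a \<in> V \<and> b \<in> V \<and> v a b)"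
    using n snoc.prems unfolding ls by fastforce
  have hp: "\<forall>a b. Eps a b \<in> litset ?H \<longrightarrow> \<not> v a b"
    using p snoc.prems unfolding ls by fastforce
  have "hintikka ?H" by (rule hint[OF ld c hn hp])
  moreover have "\<not> negPart (Eps a b) ?H" using negPart_char[OF ld] hn y by auto
  moreover have "refH a0 ?H" using snoc by auto
  ultimately have "refH a0 (Disj ?H (Eps a b))" using ld by (intro refH.r5)
  thus ?case using y by simp
qed

lemma refute_countermodel:
  assumes c: "closedR v" and f: "\<not> evalf v A"
  shows "refH a0 A"
proof -
  define vs where "vs = varsl A"
  define V where "V = set vs"
  define N where "N = map (\<lambda>(a,b). Neg (Eps a b)) (filter (\<lambda>(a,b). v a b) (List.product vs vs))"
  define P where "P = map (\<lambda>(a,b). Eps a b) (filter (\<lambda>(a,b). \<not> v a b) (List.product vs vs))"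
  have setN: "set N = {Neg (Eps a b) | a b. a \<in> V \<and> b \<in> V \<and> v a b}"
    unfolding N_def V_def by auto
  have setP: "set P = {Eps a b | a b. a \<in> V \<and> b \<in> V \<and> \<not> v a b}"
    unfolding P_def V_def by auto
  obtain D0 where D0r: "refH a0 D0" and D0l: "litDisj D0"
    and n: "\<forall>a b. Neg (Eps a b) \<in> litset D0 \<longleftrightarrow> (a \<in> V \<and> b \<in> V \<and> v a b)"
    and p: "\<forall>a b. Eps a b \<in> litset D0 \<longrightarrow> (a \<in> V \<and> b \<in> V \<and> \<not> v a b)"
    and lits: "\<forall>l\<in>litset D0. \<exists>a b. l = Eps a b \<or> l = Neg (Eps a b)"
  proof (cases "N = []")
    case True
    have Vne: "vs \<noteq> []" unfolding vs_def by (rule varsl_ne)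
    define x where "x = hd vs"
    have xV: "x \<in> V" unfolding x_def V_def using Vne by simp
    have nv: "\<forall>a\<in>V. \<forall>b\<in>V. \<not> v a b" using True setN by auto
    have "refH a0 (Eps x x)"
      by (rule refH.r4[OF refH.r1, of _ "\<lambda>_. a0"]) simp
    moreover have "litDisj (Eps x x)" by (rule litDisj.intros)
    ultimately show ?thesis using that nv xV by auto
  next
    case False
    then obtain m ms where Nm: "N = m # ms" by (cases N) auto
    define D where "D = foldl Disj m ms"
    have ly: "\<forall>y\<in>set N. litset y = {y} \<and> litDisj y" using setN by (auto intro: litDisj.intros)
    have lsD: "litset D = set N" unfolding D_def litset_foldl using ly unfolding Nm by auto
    have "refH a0 (substN (\<lambda>_. a0) D)"
    proof (rule refH.r3[OF _ refH.r2])
      show "provH (Imp (substN (\<lambda>_. a0) D) (Neg (Eps a0 a0)))"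
      proof (rule provH.taut, unfold taut_def, intro allI)
        fix w
        have all: "\<forall>l\<in>litset (substN (\<lambda>_. a0) D). l = Neg (Eps a0 a0)"
          unfolding litset_substN lsD setN by auto
        have "evalf w (substN (\<lambda>_. a0) D) \<Longrightarrow> evalf w (Neg (Eps a0 a0))"
        proof -
          assume "evalf w (substN (\<lambda>_. a0) D)"
          then obtain l where "l \<in> litset (substN (\<lambda>_. a0) D)" "evalf w l"
            using evalf_litset by blast
          thus ?thesis using all by auto
        qed
        thus "evalf w (Imp (substN (\<lambda>_. a0) D) (Neg (Eps a0 a0)))"
          unfolding Imp_def by auto
      qed
    qed
    hence "refH a0 D" by (rule refH.r4) simp
    moreover have "litDisj D" unfolding D_def
      using ly unfolding Nm by (auto intro!: litDisj_foldl)
    moreover have "\<forall>a b. Neg (Eps a b) \<in> litset D \<longleftrightarrow> (a \<in> V \<and> b \<in> V \<and> v a b)"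
      unfolding lsD setN by auto
    moreover have "\<forall>a b. Eps a b \<in> litset D \<longrightarrow> (a \<in> V \<and> b \<in> V \<and> \<not> v a b)"
      unfolding lsD setN by auto
    moreover have "\<forall>l\<in>litset D. \<exists>a b. l = Eps a b \<or> l = Neg (Eps a b)"
      unfolding lsD setN by auto
    ultimately show ?thesis by (rule that)
  qed
  define F where "F = foldl Disj D0 P"
  have "refH a0 F" unfolding F_def
    by (rule add_pos[OF c D0r D0l n]) (use p lits setP in auto)
  moreover have "provH (Imp A F)"
  proof (rule provH.taut, unfold taut_def, intro allI)
    fix w
    show "evalf w (Imp A F)"
    proof (cases "evalf w F")
      case False
      have "\<forall>y\<in>set P. litset y = {y}" using setP by auto
      hence lsF: "litset F = litset D0 \<union> set P" unfolding F_def litset_foldl by auto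
      have "\<forall>a\<in>set (varsl A). \<forall>b\<in>set (varsl A). v a b = w a b"
      proof (intro ballI)
        fix a b assume "a \<in> set (varsl A)" "b \<in> set (varsl A)"
        hence ab: "a \<in> V" "b \<in> V" unfolding V_def vs_def by auto
        show "v a b = w a b"
        proof (cases "v a b")
          case True
          hence "Neg (Eps a b) \<in> litset F" using n ab lsF by auto
          thus ?thesis using False True by (auto simp: evalf_litset[of w F])
        next
          case nv: False
          hence "Eps a b \<in> litset F" using setP ab lsF by auto
          thus ?thesis using False nv by (auto simp: evalf_litset[of w F])
        qed
      qed
      hence "evalf v A = evalf w A" by (rule evalf_cong)
      thus ?thesis using f by (simp add: Imp_def)
    qed (simp add: Imp_def)
  qed
  ultimately show ?thesis by (rule refH.r3[rotated])
qed

theorem theorem3p2: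
  fixes a0 :: nat and A :: fm
  shows "\<not> provH A \<longrightarrow> refH a0 A"
proof
  assume "\<not> provH A"
  then obtain v where "closedR v" "\<not> evalf v A" using completeness by blast
  thus "refH a0 A" by (rule refute_countermodel)
qed

end
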